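(* Let $\alpha\in(0,1)$, let $A=\alpha/\sum_{k=2}^\infty\frac{1}{k(\log k)^2}$, and set $\alpha_1=0$, $\alpha_k=A/[k(\log k)^2]$ for $k>1$ (so $\sum_k\alpha_k=\alpha$). Let $(Z_k)_{k\in\mathbb N}$ be independent with $Z_k\sim N(\mu_k,1)$, where for $k>1$ all hypotheses are non-null with $\mu_k=(\log k)^{-1/c}$ for some fixed $c>2$, and let $p_k=1-\Phi(Z_k)$. Then the online Bonferroni test, which rejects iff there exists $k\in\mathbb N$ with $p_k\le\alpha_k$, has power one, i.e. $\mathbb P(\exists k\in\mathbb N:\ p_k\le\alpha_k)=1$.
   Context: $\Phi$ is the standard Gaussian CDF. *)

theory Defs
  imports "HOL-Probability.Probability"
begin

definition Phi :: "real \<Rightarrow> real" where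
  "Phi x = cdf std_normal_distribution x"

definition bonf_A :: "real \<Rightarrow> real" where
  "bonf_A \<alpha> = \<alpha> / (\<Sum>k. if k < 2 then 0 else 1 / (real k * (ln (real k))\<^sup>2))"

definition bonf_alpha :: "real \<Rightarrow> nat \<Rightarrow> real" where
  "bonf_alpha \<alpha> k = (if k \<le> 1 then 0 else bonf_A \<alpha> / (real k * (ln (real k))\<^sup>2))"

definition bonf_mu :: "real \<Rightarrow> real \<Rightarrow> nat \<Rightarrow> real" where
  "bonf_mu \<mu>1 c k = (if k \<le> 1 then \<mu>1 else (ln (real k)) powr (- 1 / c))"

end

theory Submission imports Defs "HOL-Real_Asymp.Real_Asymp" begin
lemma S_summable: "summable (\<lambda>k::nat. if k < 2 then 0 else 1 / (real k * (ln (real k))\<^sup>2))"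
proof -
  define g where "g n = 1 / (real (max n 2) * (ln (real (max n 2)))\<^sup>2)" for n :: nat
  have gpos: "g n \<ge> 0" for n unfolding g_def by simp
  have mono: "g (Suc m) \<le> g m" if "0 < m" for m
  proof -
    have "real (max m 2) \<le> real (max (Suc m) 2)" by simp
    moreover have "ln (real (max m 2)) \<le> ln (real (max (Suc m) 2))" by simp
    moreover have "ln (real (max m 2)) > 0" by simp
    ultimately have "real (max m 2) * (ln (real (max m 2)))\<^sup>2 \<le> real (max (Suc m) 2) * (ln (real (max (Suc m) 2)))\<^sup>2"
      by (intro mult_mono power_mono) auto
    moreover have "real (max m 2) * (ln (real (max m 2)))\<^sup>2 > 0" by simp
    ultimately show ?thesis unfolding g_def by (intro divide_left_mono) auto
  qed
  have eq: "2^n * g (2^n) = inverse (real n ^ 2) / (ln 2)\<^sup>2" if "n \<ge> 1" for n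
  proof -
    have "max (2^n) 2 = (2::nat)^n" using that
      by (metis max.absorb1 power_increasing_iff one_less_numeral_iff semiring_norm(76) power_one_right)
    then show ?thesis unfolding g_def using that by (simp add: ln_realpow field_simps power_mult_distrib)
  qed
  have "summable (\<lambda>n. inverse (real n ^ 2) / (ln 2)\<^sup>2)"
    by (intro summable_divide inverse_power_summable) auto
  then have "summable (\<lambda>n. 2^n * g (2^n))"
    by (rule summable_comparison_test'[where N=1]) (use eq gpos in simp)
  then have "summable g" using condensation_test[of g] mono gpos by blast
  then show ?thesis
    by (rule summable_comparison_test'[where N=2]) (auto simp: g_def max_def)
qed

lemma H_not_summable: "\<not> summable (\<lambda>k::nat. 1 / (real k * ln (real k)))"
proof
  assume H: "summable (\<lambda>k::nat. 1 / (real k * ln (real k)))"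
  define g where "g n = 1 / (real (max n 2) * ln (real (max n 2)))" for n :: nat
  have gpos: "g n \<ge> 0" for n unfolding g_def by simp
  have mono: "g (Suc m) \<le> g m" if "0 < m" for m
  proof -
    have "real (max m 2) \<le> real (max (Suc m) 2)" by simp
    moreover have "ln (real (max m 2)) \<le> ln (real (max (Suc m) 2))" by simp
    moreover have "ln (real (max m 2)) > 0" by simp
    ultimately have "real (max m 2) * (ln (real (max m 2))) \<le> real (max (Suc m) 2) * (ln (real (max (Suc m) 2)))"
      by (intro mult_mono) auto
    moreover have "real (max m 2) * (ln (real (max m 2))) > 0" by simp
    ultimately show ?thesis unfolding g_def by (intro divide_left_mono) auto
  qed
  have "summable g"
    using H by (rule summable_comparison_test'[where N=2]) (auto simp: g_def max_def)
  then have "summable (\<lambda>n. 2^n * g (2^n))" using condensation_test[of g] mono gpos by blast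
  then have "summable (\<lambda>n. ln 2 * (2^n * g (2^n)))" by (rule summable_mult)
  moreover have "ln 2 * (2^n * g (2^n)) = inverse (real n)" if "n \<ge> 1" for n
  proof -
    have "max (2^n) 2 = (2::nat)^n" using that
      by (metis max.absorb1 power_increasing_iff one_less_numeral_iff semiring_norm(76) power_one_right)
    then show ?thesis unfolding g_def using that by (simp add: ln_realpow field_simps)
  qed
  ultimately have "summable (\<lambda>n. inverse (real n))"
    by (subst (asm) summable_cong[where g="\<lambda>n. inverse (real n)"])
       (auto intro: eventually_mono[OF eventually_ge_at_top[of 1]])
  then show False using not_summable_harmonic by blast
qed
lemma Phi_tail:
  assumes "0 \<le> s"
  shows "1 - Phi s \<le> exp (- s\<^sup>2 / 2)"
proof -
  interpret N: prob_space std_normal_distribution by (rule prob_space_normal_density, simp)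
  have "1 - Phi s = N.prob (UNIV - {..s})"
    unfolding Phi_def cdf_def2 by (subst N.prob_compl[symmetric]) auto
  also have "UNIV - {..s} = {s<..}" by auto
  finally have eq: "1 - Phi s = N.prob {s<..}" .
  have pw: "ennreal (std_normal_density x) * indicator {s<..} x \<le> ennreal (exp (- s\<^sup>2 / 2)) * ennreal (normal_density s 1 x)" for x
  proof (cases "s < x")
    case True
    have "- x\<^sup>2 / 2 \<le> - s\<^sup>2 / 2 + (- (x - s)\<^sup>2 / 2)"
    proof -
      have "0 \<le> s * x - s * s" using mult_nonneg_nonneg[of s "x - s"] True assms by (simp add: algebra_simps)
      then show ?thesis by (simp add: power2_eq_square field_simps)
    qed
    then have "exp (- x\<^sup>2 / 2) \<le> exp (- s\<^sup>2 / 2) * exp (- (x - s)\<^sup>2 / 2)"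
      by (simp add: exp_add[symmetric])
    then have "std_normal_density x \<le> exp (- s\<^sup>2 / 2) * normal_density s 1 x"
      unfolding normal_density_def by (simp add: divide_right_mono)
    then show ?thesis using True by (simp add: ennreal_mult'' [symmetric] ennreal_leI)
  qed simp
  have "emeasure std_normal_distribution {s<..} = (\<integral>\<^sup>+x. ennreal (std_normal_density x) * indicator {s<..} x \<partial>lborel)"
    by (subst emeasure_density) auto
  also have "\<dots> \<le> (\<integral>\<^sup>+x. ennreal (exp (- s\<^sup>2 / 2)) * ennreal (normal_density s 1 x) \<partial>lborel)"
    by (intro nn_integral_mono pw)
  also have "\<dots> = ennreal (exp (- s\<^sup>2 / 2)) * (\<integral>\<^sup>+x. ennreal (normal_density s 1 x) \<partial>lborel)"
    by (intro nn_integral_cmult) auto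
  also have "(\<integral>\<^sup>+x. ennreal (normal_density s 1 x) \<partial>lborel) = 1"
  proof -
    interpret P: prob_space "density lborel (normal_density s 1)" by (rule prob_space_normal_density, simp)
    have "emeasure (density lborel (normal_density s 1)) UNIV = 1"
      using P.emeasure_space_1 by simp
    then show ?thesis by (subst (asm) emeasure_density) auto
  qed
  finally have "emeasure std_normal_distribution {s<..} \<le> ennreal (exp (- s\<^sup>2 / 2))" by simp
  then have "N.prob {s<..} \<le> exp (- s\<^sup>2 / 2)"
    by (simp add: N.emeasure_eq_measure)
  then show ?thesis using eq by simp
qed

lemma normal_lower:
  assumes "1 \<le> s" "0 \<le> \<mu>" "\<mu> \<le> 1"
  shows "emeasure (density lborel (normal_density \<mu> 1)) {s..}
     \<ge> ennreal (exp (- s\<^sup>2 / 2) * exp (s * \<mu>) / (s * exp 2 * sqrt (2 * pi)))"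
proof -
  define c where "c = exp (- s\<^sup>2 / 2) * exp (s * \<mu>) / (exp 2 * sqrt (2 * pi))"
  have cpos: "c \<ge> 0" unfolding c_def by simp
  have pw: "ennreal c * indicator {s..s + 1/s} x \<le> ennreal (normal_density \<mu> 1 x) * indicator {s..} x" for x
  proof (cases "x \<in> {s..s + 1/s}")
    case True
    have s0: "s > 0" using assms by simp
    have a: "0 \<le> x - \<mu>" using True assms by auto
    have b: "x - \<mu> \<le> s - \<mu> + 1/s" using True by auto
    have "(x - \<mu>)\<^sup>2 \<le> (s - \<mu> + 1/s)\<^sup>2" using a b by (intro power_mono) auto
    also have "\<dots> = (s - \<mu>)\<^sup>2 + 2 * (s - \<mu>) / s + 1 / s\<^sup>2"
      using s0 by (simp add: power2_eq_square field_simps)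
    also have "2 * (s - \<mu>) / s \<le> 2" using s0 assms by (simp add: divide_le_eq)
    also have "1 / s\<^sup>2 \<le> 1" using assms by (simp add: divide_le_eq one_le_power)
    finally have f: "(x - \<mu>)\<^sup>2 \<le> (s - \<mu>)\<^sup>2 + 3" by simp
    have "\<mu>\<^sup>2 \<le> 1" using assms by (simp add: power_le_one)
    with f have "(x - \<mu>)\<^sup>2 \<le> s\<^sup>2 - 2 * s * \<mu> + 4"
      by (simp add: power2_eq_square algebra_simps)
    then have "- s\<^sup>2 / 2 + s * \<mu> + (- 2) \<le> - (x - \<mu>)\<^sup>2 / 2" by simp
    then have "exp (- s\<^sup>2 / 2 + s * \<mu> + (- 2)) \<le> exp (- (x - \<mu>)\<^sup>2 / 2)" by simp
    moreover have "exp (- s\<^sup>2 / 2 + s * \<mu> + (- 2)) = exp (- s\<^sup>2 / 2) * exp (s * \<mu>) / exp 2"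
      unfolding exp_add exp_minus by (simp only: divide_inverse)
    ultimately have "exp (- s\<^sup>2 / 2) * exp (s * \<mu>) / exp 2 \<le> exp (- (x - \<mu>)\<^sup>2 / 2)"
      by metis
    then have "exp (- s\<^sup>2 / 2) * exp (s * \<mu>) / exp 2 / sqrt (2 * pi) \<le> exp (- (x - \<mu>)\<^sup>2 / 2) / sqrt (2 * pi)"
      by (rule divide_right_mono) simp
    then have "c \<le> normal_density \<mu> 1 x"
      unfolding c_def normal_density_def by (simp add: divide_divide_eq_left)
    then show ?thesis using True by (auto intro: ennreal_leI)
  qed simp
  have "ennreal c * ennreal (1 / s) = (\<integral>\<^sup>+x. ennreal c * indicator {s..s + 1/s} x \<partial>lborel)"
    using assms by (subst nn_integral_cmult_indicator) auto
  also have "\<dots> \<le> (\<integral>\<^sup>+x. ennreal (normal_density \<mu> 1 x) * indicator {s..} x \<partial>lborel)"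
    by (intro nn_integral_mono pw)
  also have "\<dots> = emeasure (density lborel (normal_density \<mu> 1)) {s..}"
    by (subst emeasure_density) auto
  finally show ?thesis
    using cpos assms by (simp add: ennreal_mult''[symmetric] c_def mult.commute mult.left_commute mult.assoc)
qed

theorem lemma4:
  fixes M :: "'a measure" and Z :: "nat \<Rightarrow> 'a \<Rightarrow> real"
    and \<alpha> c \<mu>1 :: real
  assumes "prob_space M"
    and "0 < \<alpha>" and "\<alpha> < 1"
    and "c > 2"
    and "prob_space.indep_vars M (\<lambda>_. borel) Z {1..}"
    and "\<And>k. k \<ge> 1 \<Longrightarrow> distributed M lborel (Z k) (normal_density (bonf_mu \<mu>1 c k) 1)"
  shows "measure M {\<omega> \<in> space M. \<exists>k\<ge>1. 1 - Phi (Z k \<omega>) \<le> bonf_alpha \<alpha> k} = 1"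
proof -
  interpret prob_space M by (rule assms(1))
  have indep: "indep_vars (\<lambda>_. borel) Z {1..}" using assms(5) .
  have rv: "\<And>k. k \<ge> 1 \<Longrightarrow> Z k \<in> borel_measurable M"
    using indep unfolding indep_vars_def by auto
  have isets: "indep_sets (\<lambda>i. sigma_sets (space M) {Z i -` A \<inter> space M | A. A \<in> sets borel}) {1..}"
    using indep unfolding indep_vars_def by auto
  define A where "A = bonf_A \<alpha>"
  define ak where "ak k = bonf_alpha \<alpha> k" for k
  define L where "L k = ln (real k)" for k :: nat
  define s where "s k = sqrt (2 * ln (1 / ak k))" for k
  define mu where "mu k = bonf_mu \<mu>1 c k" for k
  define b where "b = 1/2 - 1/c"
  define C1 where "C1 = exp 2 * sqrt (2 * pi)"
  define h where "h k = 1 / (real k * ln (real k))" for k :: nat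
  have b0: "b > 0" using assms(4) unfolding b_def by (simp add: field_simps)
  have C1pos: "C1 > 0" unfolding C1_def by simp
  have Spos: "0 < (\<Sum>k. if k < 2 then 0 else 1 / (real k * (ln (real k))\<^sup>2))"
    by (rule suminf_pos2[OF S_summable, of 2]) auto
  have Apos: "A > 0" unfolding A_def bonf_A_def using Spos assms(2) by simp
  have ak_eq: "ak k = A / (real k * (L k)\<^sup>2)" if "k \<ge> 2" for k
    using that unfolding ak_def bonf_alpha_def A_def L_def by simp
  have mu_eq: "mu k = (L k) powr (- 1 / c)" if "k \<ge> 2" for k
    using that unfolding mu_def bonf_mu_def L_def by simp
  have Llim: "filterlim L at_top sequentially" unfolding L_def by real_asymp
  have ev1: "eventually (\<lambda>x::real. 1 \<le> x) at_top" by real_asymp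
  have ev2: "eventually (\<lambda>x::real. A \<le> x\<^sup>2) at_top" using Apos by real_asymp
  have ev4: "eventually (\<lambda>x::real. x * sqrt (6*x) * C1 \<le> A * exp (sqrt (2*x) * x powr (b - 1/2))) at_top"
    using Apos b0 C1pos by real_asymp
  have ev3: "eventually (\<lambda>k. (L k)\<^sup>2 \<le> A * (real k)\<^sup>2) sequentially"
    unfolding L_def using Apos by real_asymp
  have "eventually (\<lambda>k. 2 \<le> k \<and> 1 \<le> L k \<and> A \<le> (L k)\<^sup>2 \<and> (L k)\<^sup>2 \<le> A * (real k)\<^sup>2 \<and>
        L k * sqrt (6 * L k) * C1 \<le> A * exp (sqrt (2 * L k) * L k powr (b - 1/2))) sequentially"
    using eventually_ge_at_top[of 2] ev3 Llim[unfolded filterlim_iff, rule_format, OF ev1]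
      Llim[unfolded filterlim_iff, rule_format, OF ev2] Llim[unfolded filterlim_iff, rule_format, OF ev4]
    by eventually_elim auto
  then obtain K where K: "\<And>k. k \<ge> K \<Longrightarrow> 2 \<le> k \<and> 1 \<le> L k \<and> A \<le> (L k)\<^sup>2 \<and> (L k)\<^sup>2 \<le> A * (real k)\<^sup>2 \<and>
        L k * sqrt (6 * L k) * C1 \<le> A * exp (sqrt (2 * L k) * L k powr (b - 1/2))"
    unfolding eventually_sequentially by blast
  have K2: "K \<ge> 2" using K[of K] by simp
  define p where "p k = prob {\<omega> \<in> space M. s k \<le> Z k \<omega>}" for k
  have kf: "ak k > 0 \<and> sqrt (2 * L k) \<le> s k \<and> s k \<le> sqrt (6 * L k) \<and> 1 \<le> s k \<and>
      exp (- (s k)\<^sup>2 / 2) = ak k \<and> 0 \<le> mu k \<and> mu k \<le> 1 \<and> mu k = L k powr (b - 1/2) \<and>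
      ak k = A / (real k * (L k)\<^sup>2) \<and> 1 \<le> L k \<and> 2 \<le> k \<and>
      L k * sqrt (6 * L k) * C1 \<le> A * exp (sqrt (2 * L k) * L k powr (b - 1/2))" if "k \<ge> K" for k
  proof -
    note Kk = K[OF that]
    have k2: "k \<ge> 2" and L1: "1 \<le> L k" and AL: "A \<le> (L k)\<^sup>2" and LA: "(L k)\<^sup>2 \<le> A * (real k)\<^sup>2"
      using Kk by auto
    have ake: "ak k = A / (real k * (L k)\<^sup>2)" using ak_eq k2 by simp
    have kpos: "real k > 0" using k2 by simp
    have Lpos: "L k > 0" using L1 by simp
    have akpos: "ak k > 0" using ake Apos kpos Lpos by simp
    have inv: "1 / ak k = real k * (L k)\<^sup>2 / A" using ake by simp
    have lo: "real k \<le> 1 / ak k" unfolding inv using AL kpos Apos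
      by (simp add: le_divide_eq)
    have hi: "1 / ak k \<le> real k ^ 3" unfolding inv using LA kpos Apos
      by (simp add: divide_le_eq power2_eq_square power3_eq_cube mult_left_mono mult.assoc mult.left_commute)
         (simp add: ac_simps)
    have lnlo: "L k \<le> ln (1 / ak k)" unfolding L_def using lo kpos akpos by (subst ln_le_cancel_iff) auto
    have "ln (1 / ak k) \<le> ln (real k ^ 3)" using hi kpos akpos by (subst ln_le_cancel_iff) auto
    then have lnhi: "ln (1 / ak k) \<le> 3 * L k" unfolding L_def using kpos by (simp add: ln_realpow)
    have slo: "sqrt (2 * L k) \<le> s k" unfolding s_def using lnlo by simp
    have shi: "s k \<le> sqrt (6 * L k)" unfolding s_def using lnhi by simp
    have "1 \<le> sqrt (2 * L k)" using L1 by simp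
    then have s1: "1 \<le> s k" using slo by linarith
    have "(s k)\<^sup>2 = 2 * ln (1 / ak k)" unfolding s_def using lnlo Lpos by simp
    then have sexp: "exp (- (s k)\<^sup>2 / 2) = ak k" using akpos by (simp add: ln_div)
    have mue: "mu k = L k powr (b - 1/2)" using mu_eq k2 unfolding b_def by simp
    have mu0: "0 \<le> mu k" unfolding mue by simp
    have "b - 1/2 \<le> 0" unfolding b_def using assms(4) by simp
    then have "L k powr (b - 1/2) \<le> L k powr 0" using L1 by (intro powr_mono) auto
    then have mu1: "mu k \<le> 1" unfolding mue using Lpos by simp
    show ?thesis using akpos slo shi s1 sexp mu0 mu1 mue ake Kk by auto
  qed
  have key1: "h k \<le> p k" if "k \<ge> K" for k
  proof -
    note f = kf[OF that]
    have k1: "k \<ge> 1" using f by simp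
    have set_eq: "{\<omega> \<in> space M. s k \<le> Z k \<omega>} = Z k -` {s k..} \<inter> space M" by auto
    have "emeasure M (Z k -` {s k..} \<inter> space M)
        = (\<integral>\<^sup>+x. ennreal (normal_density (mu k) 1 x) * indicator {s k..} x \<partial>lborel)"
      unfolding mu_def by (rule distributed_emeasure[OF assms(6)[OF k1]]) simp
    also have "\<dots> = emeasure (density lborel (normal_density (mu k) 1)) {s k..}"
      by (subst emeasure_density) auto
    also have "\<dots> \<ge> ennreal (exp (- (s k)\<^sup>2 / 2) * exp (s k * mu k) / (s k * exp 2 * sqrt (2 * pi)))"
      using f by (intro normal_lower) auto
    finally have "ennreal (exp (- (s k)\<^sup>2 / 2) * exp (s k * mu k) / (s k * exp 2 * sqrt (2 * pi))) \<le> ennreal (p k)"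
      unfolding p_def set_eq by (simp add: emeasure_eq_measure)
    then have pb: "ak k * exp (s k * mu k) / (s k * C1) \<le> p k"
      using f by (subst (asm) ennreal_le_iff) (auto simp: C1_def mult.assoc p_def)
    define X where "X = sqrt (2 * L k) * L k powr (b - 1/2)"
    have "X \<le> s k * mu k" unfolding X_def using f by (intro mult_mono) auto
    then have "A * exp X \<le> A * exp (s k * mu k)" using Apos by simp
    moreover have "L k * s k * C1 \<le> L k * sqrt (6 * L k) * C1" using f C1pos by (intro mult_mono) auto
    ultimately have m: "L k * s k * C1 \<le> A * exp (s k * mu k)" using f unfolding X_def by linarith
    have kL: "real k * (L k)\<^sup>2 * s k * C1 > 0" using f C1pos by simp
    have "h k = (L k * s k * C1) / (real k * (L k)\<^sup>2 * s k * C1)"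
      unfolding h_def using f C1pos by (simp add: L_def power2_eq_square field_simps)
    also have "\<dots> \<le> (A * exp (s k * mu k)) / (real k * (L k)\<^sup>2 * s k * C1)"
      using m kL by (intro divide_right_mono) auto
    also have "\<dots> = ak k * exp (s k * mu k) / (s k * C1)"
      using f C1pos by (simp add: field_simps)
    finally show ?thesis using pb by linarith
  qed
  have key2: "1 - Phi (Z k \<omega>) \<le> ak k" if "k \<ge> K" "s k \<le> Z k \<omega>" for k \<omega>
  proof -
    have f: "1 \<le> s k" "exp (- (s k)\<^sup>2 / 2) = ak k" using kf[OF that(1)] by auto
    have "Phi (s k) \<le> Phi (Z k \<omega>)" unfolding Phi_def
      using finite_borel_measure.cdf_nondecreasing[OF real_distribution.finite_borel_measure_M[OF real_dist_normal_dist]] that(2) by blast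
    moreover have "1 - Phi (s k) \<le> exp (- (s k)\<^sup>2 / 2)" using f(1) by (intro Phi_tail) simp
    ultimately show ?thesis using f(2) by simp
  qed
  have hpos: "h k \<ge> 0" for k unfolding h_def by (cases k) simp_all
  have Phim: "Phi \<in> borel_measurable borel"
  proof (rule borel_measurable_mono)
    show "mono Phi" unfolding mono_def Phi_def
      using finite_borel_measure.cdf_nondecreasing[OF real_distribution.finite_borel_measure_M[OF real_dist_normal_dist]] by blast
  qed
  define E where "E = {\<omega>\<in>space M. \<exists>k\<ge>1. 1 - Phi (Z k \<omega>) \<le> bonf_alpha \<alpha> k}"
  have Eev: "E \<in> events" unfolding E_def
  proof (rule sets.sets_Collect_countable_Ex)
    fix k :: nat
    show "{\<omega> \<in> space M. k \<ge> 1 \<and> 1 - Phi (Z k \<omega>) \<le> bonf_alpha \<alpha> k} \<in> events"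
    proof (cases "k \<ge> 1")
      case True
      note [measurable] = rv[OF True] Phim
      show ?thesis using True by measurable
    qed simp
  qed
  define N where "N = space M - E"
  define F where "F k = Z k -` {..<s k} \<inter> space M" for k
  have Fev: "F k \<in> events" if "k \<ge> 1" for k
    unfolding F_def by (rule measurable_sets[OF rv[OF that]]) simp
  have Gev: "{\<omega> \<in> space M. s k \<le> Z k \<omega>} \<in> events" if "k \<ge> 1" for k
  proof -
    note [measurable] = rv[OF that]
    show ?thesis by measurable
  qed
  have probF: "prob (F k) = 1 - p k" if "k \<ge> 1" for k
  proof -
    have "F k = space M - {\<omega> \<in> space M. s k \<le> Z k \<omega>}" unfolding F_def by auto
    then show ?thesis unfolding p_def using prob_compl[OF Gev[OF that]] by simp
  qed
  have NF: "N \<subseteq> (\<Inter>k\<in>{K..n}. F k)" for n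
  proof
    fix \<omega> assume w: "\<omega> \<in> N"
    show "\<omega> \<in> (\<Inter>k\<in>{K..n}. F k)"
    proof
      fix k assume k: "k \<in> {K..n}"
      then have kK: "k \<ge> K" by simp
      then have "k \<ge> 1" using K2 by simp
      with w have nz: "\<not> (1 - Phi (Z k \<omega>) \<le> ak k)" "\<omega> \<in> space M"
        unfolding N_def E_def ak_def by auto
      then have "\<not> (s k \<le> Z k \<omega>)" using key2[OF kK] by blast
      then show "\<omega> \<in> F k" unfolding F_def using nz by auto
    qed
  qed
  have bound: "prob N \<le> exp (- (\<Sum>k\<in>{K..n}. h k))" if "n \<ge> K" for n
  proof -
    have ne: "{K..n} \<noteq> {}" using that by simp
    have Iev: "(\<Inter>k\<in>{K..n}. F k) \<in> events"
      using ne K2 by (intro sets.finite_INT) (auto intro!: Fev)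
    have "prob N \<le> prob (\<Inter>k\<in>{K..n}. F k)"
      using NF Iev by (intro finite_measure_mono) auto
    also have "\<dots> = (\<Prod>k\<in>{K..n}. prob (F k))"
    proof -
      have "\<forall>J\<subseteq>{1..}. J \<noteq> {} \<longrightarrow> finite J \<longrightarrow> (\<forall>A\<in>Pi J (\<lambda>i. sigma_sets (space M) {Z i -` A \<inter> space M | A. A \<in> sets borel}).
          prob (\<Inter>j\<in>J. A j) = (\<Prod>j\<in>J. prob (A j)))"
        using isets unfolding indep_sets_def by blast
      moreover have "{K..n} \<subseteq> {1..}" using K2 by auto
      moreover have "F \<in> Pi {K..n} (\<lambda>i. sigma_sets (space M) {Z i -` A \<inter> space M | A. A \<in> sets borel})"
      proof
        fix x assume "x \<in> {K..n}"
        have "F x \<in> {Z x -` A \<inter> space M | A. A \<in> sets borel}"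
          unfolding F_def by (intro CollectI exI[of _ "{..<s x}"]) simp
        then show "F x \<in> sigma_sets (space M) {Z x -` A \<inter> space M | A. A \<in> sets borel}"
          by (rule sigma_sets.Basic)
      qed
      ultimately show ?thesis using ne by auto
    qed
    also have "\<dots> = (\<Prod>k\<in>{K..n}. 1 - p k)"
      using K2 by (intro prod.cong) (auto simp: probF)
    also have "\<dots> \<le> (\<Prod>k\<in>{K..n}. exp (- p k))"
    proof (intro prod_mono conjI)
      fix k assume "k \<in> {K..n}"
      show "0 \<le> 1 - p k" unfolding p_def by simp
      show "1 - p k \<le> exp (- p k)" using exp_ge_add_one_self[of "- p k"] by simp
    qed
    also have "\<dots> = exp (- (\<Sum>k\<in>{K..n}. p k))"
      by (simp add: exp_sum[symmetric] sum_negf)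
    also have "\<dots> \<le> exp (- (\<Sum>k\<in>{K..n}. h k))"
    proof -
      have "(\<Sum>k\<in>{K..n}. h k) \<le> (\<Sum>k\<in>{K..n}. p k)" by (rule sum_mono) (use key1 in auto)
      then show ?thesis by simp
    qed
    finally show ?thesis .
  qed
  have unb: "\<exists>n\<ge>K. B < (\<Sum>k\<in>{K..n}. h k)" for B
  proof (rule ccontr)
    assume "\<not> ?thesis"
    then have le: "\<And>n. n \<ge> K \<Longrightarrow> (\<Sum>k\<in>{K..n}. h k) \<le> B" by (auto simp: not_less)
    have "(\<Sum>k\<le>n. h k) \<le> (\<Sum>k<K. h k) + B" for n
    proof -
      have "(\<Sum>k\<le>n. h k) \<le> (\<Sum>k\<in>{..<K} \<union> {K..max n K}. h k)"
        using hpos by (intro sum_mono2) auto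
      also have "\<dots> = (\<Sum>k<K. h k) + (\<Sum>k\<in>{K..max n K}. h k)"
        by (subst sum.union_disjoint) auto
      also have "\<dots> \<le> (\<Sum>k<K. h k) + B" using le[of "max n K"] by simp
      finally show ?thesis .
    qed
    then have "summable h" by (intro bounded_imp_summable hpos)
    then show False using H_not_summable unfolding h_def by blast
  qed
  have N0: "prob N = 0"
  proof (rule ccontr)
    assume "prob N \<noteq> 0"
    then have pos: "prob N > 0" using measure_nonneg[of M N] by linarith
    obtain n where n: "n \<ge> K" "- ln (prob N) + 1 < (\<Sum>k\<in>{K..n}. h k)" using unb by blast
    have "prob N \<le> exp (- (\<Sum>k\<in>{K..n}. h k))" using bound[OF n(1)] .
    also have "\<dots> < exp (ln (prob N) - 1)" using n(2) by simp
    also have "\<dots> \<le> exp (ln (prob N))" by simp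
    also have "\<dots> = prob N" using pos by simp
    finally show False by simp
  qed
  have "E = space M - N" unfolding N_def E_def by auto
  then have "prob E = 1 - prob N"
    using prob_compl[of N] Eev unfolding N_def by (simp add: Diff_Diff_Int Int_absorb1 sets.sets_into_space)
  then show ?thesis using N0 unfolding E_def by simp
qed

end
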